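(* Let $\mathfrak{g}$ be a simply laced semisimple Lie algebra with weight lattice $P$ and $P_{\mathbb{Q}}=P\otimes_{\mathbb{Z}}\mathbb{Q}$, and let $\hat{\mathcal{O}}^{\mathfrak{g}}_{\mathbb{Q}}$ be the $\mathbb{C}_q$-module of formal sums $\sum_{\lambda,\mu\in P_{\mathbb{Q}}}c_{\lambda,\mu}Y^\lambda X^\mu$ (infinitely many nonzero $c_{\lambda,\mu}\in\mathbb{C}_q$ allowed). For $\gamma=\begin{pmatrix} b & a\\ p & r\end{pmatrix}\in SL(2,\mathbb{Z})$ define the $\mathbb{C}_q$-linear map $\rho(\gamma)$ termwise on basis elements by $$\rho(\gamma)(Y^\lambda X^\mu)=q^{-(\mu,\mu)ab-2(\mu,\lambda)ap-(\lambda,\lambda)pr}\,Y^{r\lambda+a\mu}X^{p\lambda+b\mu},\qquad \lambda,\mu\in P_{\mathbb{Q}}.$$ Then $\hat{\mathcal{O}}^{\mathfrak{g}}_{\mathbb{Q}}$ forms a faithful representation of $SL(2,\mathbb{Z})$ under this action (in the sense of the context); in particular $\rho(\gamma)=\rho(\gamma')$ implies $\gamma=\gamma'$.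
   Context: $\mathbb{C}_q$ denotes the algebraic closure of $\mathbb{C}((q))$. $(\cdot,\cdot)$ is the invariant bilinear form on $\mathfrak{g}$, extended $\mathbb{Q}$-bilinearly to $P_{\mathbb{Q}}$; the coweights are identified with weights via this form. The symbols $Y^\lambda X^\mu$ are ordered monomials of the rational quantum torus with relations $X^\mu Y^\lambda=q^{-2(\mu,\lambda)}Y^\lambda X^\mu$ ($\mu,\lambda\in P_{\mathbb{Q}}$), forming a $\mathbb{C}_q$-basis of the algebra, and $\rho(\gamma)$ acts coefficientwise on formal sums. The action is a right action: $\rho(\gamma_1)\circ\rho(\gamma_2)=\rho(\gamma_2\gamma_1)$. *)

theory Defs
  imports "HOL-Analysis.Analysis" "HOL-Algebra.Algebraic_Closure_Type"
begin

no_notation fps_nth (infixl \<open>$\<close> 75)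

text \<open>The scalar field C_q: the algebraic closure of the field C((q)) of formal
  Laurent series; the variable q is the Laurent series fls_X.\<close>
type_synonym Cq = "complex fls alg_closure"

text \<open>Rational powers q^s (s rational), given by a fixed compatible system of
  roots of q in C_q, i.e. a group homomorphism (Q,+) -> C_q^* sending 1 to q.\<close>
definition qpow :: "rat \<Rightarrow> Cq" where
  "qpow = (SOME f. (\<forall>x y. f (x + y) = f x * f y) \<and> f 1 = to_ac fls_X)"

text \<open>Simply laced Cartan matrix of finite type (i.e. of a simply laced semisimple
  Lie algebra): symmetric, 2 on the diagonal, off-diagonal entries 0 or -1,
  positive definite.\<close>
definition simply_laced_cartan :: "int ^ 'n ^ 'n \<Rightarrow> bool" where
  "simply_laced_cartan C \<longleftrightarrow>
     (\<forall>i j. C $ i $ j = C $ j $ i) \<and>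
     (\<forall>i. C $ i $ i = 2) \<and>
     (\<forall>i j. i \<noteq> j \<longrightarrow> C $ i $ j \<in> {0, -1}) \<and>
     (\<forall>x :: rat ^ 'n. x \<noteq> 0 \<longrightarrow> (\<Sum>i\<in>UNIV. \<Sum>j\<in>UNIV. x $ i * of_int (C $ i $ j) * x $ j) > 0)"

text \<open>P_Q = P \<otimes> Q is modelled as rat^'n, coordinates w.r.t. the simple roots
  (which form a Q-basis of P_Q); the invariant form with (alpha,alpha)=2 is then
  given by the Cartan matrix.\<close>
definition form :: "int ^ 'n ^ 'n \<Rightarrow> rat ^ 'n \<Rightarrow> rat ^ 'n \<Rightarrow> rat" where
  "form C x y = (\<Sum>i\<in>UNIV. \<Sum>j\<in>UNIV. x $ i * of_int (C $ i $ j) * y $ j)"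

text \<open>Formal sums \<Sum> c_{lambda,mu} Y^lambda X^mu, represented by their coefficient
  function (lambda, mu) \<mapsto> c_{lambda,mu}; arbitrary supports allowed.\<close>
type_synonym 'n formal_sum = "((rat ^ 'n) \<times> (rat ^ 'n)) \<Rightarrow> Cq"

text \<open>SL(2,Z), with gamma = [[b,a],[p,r]], i.e. b = gamma$1$1, a = gamma$1$2,
  p = gamma$2$1, r = gamma$2$2.\<close>
definition SL2Z :: "(int ^ 2 ^ 2) set" where
  "SL2Z = {g. det g = 1}"

definition idx_map :: "int ^ 2 ^ 2 \<Rightarrow> (rat ^ 'n) \<times> (rat ^ 'n) \<Rightarrow> (rat ^ 'n) \<times> (rat ^ 'n)" where
  "idx_map g v = (let b = g$1$1; a = g$1$2; p = g$2$1; r = g$2$2; l = fst v; m = snd v in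
     (of_int r *s l + of_int a *s m, of_int p *s l + of_int b *s m))"

definition q_exp :: "int ^ 'n ^ 'n \<Rightarrow> int ^ 2 ^ 2 \<Rightarrow> (rat ^ 'n) \<times> (rat ^ 'n) \<Rightarrow> rat" where
  "q_exp C g v = (let b = g$1$1; a = g$1$2; p = g$2$1; r = g$2$2; l = fst v; m = snd v in
     - form C m m * of_int (a * b) - 2 * form C m l * of_int (a * p) - form C l l * of_int (p * r))"

text \<open>rho(gamma), the C_q-linear map defined termwise:
  Y^lambda X^mu \<mapsto> q^{q_exp} Y^{r lambda + a mu} X^{p lambda + b mu},
  extended coefficientwise to formal sums: the coefficient of the target monomial
  collects the contributions of all source monomials mapped to it.\<close>
definition rho :: "int ^ 'n ^ 'n \<Rightarrow> int ^ 2 ^ 2 \<Rightarrow> 'n formal_sum \<Rightarrow> 'n formal_sum" where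
  "rho C g f = (\<lambda>w. \<Sum>v\<in>{v. idx_map g v = w}. qpow (q_exp C g v) * f v)"

end

theory Submission
  imports Defs
begin


lemma root_seq:
  fixes c :: "'a::alg_closed_field"
  assumes "c \<noteq> 0"
  obtains x :: "nat \<Rightarrow> 'a" where "x 0 = c" "\<And>n. x (Suc n) ^ (n+2) = x n" "\<And>n. x n \<noteq> 0"
proof -
  define x where "x = rec_nat c (\<lambda>n y. SOME z. z ^ (n+2) = y)"
  have x0: "x 0 = c" by (simp add: x_def)
  have xs: "x (Suc n) ^ (n+2) = x n" for n
  proof -
    have "x (Suc n) = (SOME z. z ^ (n+2) = x n)" by (simp add: x_def)
    moreover have "\<exists>z. z ^ (n+2) = x n" by (rule nth_root_exists) simp
    ultimately show ?thesis by (metis (mono_tags) someI_ex)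
  qed
  have xn: "x n \<noteq> 0" for n
  proof (induction n)
    case 0 then show ?case using x0 assms by simp
  next
    case (Suc n) then show ?case using xs[of n] by (metis power_0_left add_2_eq_Suc' zero_less_Suc less_numeral_extra(3) power_eq_0_iff)
  qed
  show ?thesis using that x0 xs xn by blast
qed

definition good :: "rat \<Rightarrow> nat \<Rightarrow> bool" where
  "good s n \<longleftrightarrow> s * of_nat (fact (Suc n)) \<in> \<int>"

lemma good_mono: assumes "good s n" "n \<le> m" shows "good s m"
proof -
  have "fact (Suc n) dvd (fact (Suc m) :: nat)" using assms(2) by (intro fact_dvd) simp
  then obtain k where k: "fact (Suc m) = fact (Suc n) * (k::nat)" by blast
  have eq: "s * of_nat (fact (Suc m)) = (s * of_nat (fact (Suc n))) * of_nat k"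
    by (simp only: k of_nat_mult mult.assoc)
  have "(s * of_nat (fact (Suc n))) * of_nat k \<in> \<int>"
    using Ints_mult[OF assms(1)[unfolded good_def] Ints_of_nat] .
  then show ?thesis unfolding good_def by (simp only: eq)
qed

definition den :: "rat \<Rightarrow> nat" where "den s = nat (snd (quotient_of s))"

lemma good_den: "good s (den s)"
proof -
  obtain a b where ab: "quotient_of s = (a, b)" by (cases "quotient_of s")
  have bpos: "b > 0" using quotient_of_denom_pos[OF ab] .
  have s: "s = of_int a / of_int b" using quotient_of_div[OF ab] .
  define d where "d = nat b"
  have dpos: "d > 0" using bpos by (simp add: d_def)
  have "d dvd fact (Suc d)" using dpos by (intro dvd_fact) auto
  then obtain k where k: "fact (Suc d) = d * (k::nat)" by blast
  have fk: "rat_of_nat (fact (Suc d)) = of_int b * of_nat k"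
    by (simp only: k of_nat_mult) (use bpos in \<open>simp add: d_def\<close>)
  have "s * of_nat (fact (Suc d)) = of_int a * of_nat k"
    using bpos unfolding fk s by simp
  then show ?thesis unfolding good_def den_def ab by (simp add: d_def[symmetric])
qed

lemma hom_exists:
  fixes c :: "'a::alg_closed_field"
  assumes "c \<noteq> 0"
  shows "\<exists>f::rat \<Rightarrow> 'a. (\<forall>x y. f (x + y) = f x * f y) \<and> f 1 = c"
proof -
  obtain x :: "nat \<Rightarrow> 'a" where x0: "x 0 = c" and xs: "\<And>n. x (Suc n) ^ (n+2) = x n"
    and xn: "\<And>n. x n \<noteq> 0"
    using root_seq[OF assms] by blast
  define val where "val (s::rat) n = x n powi \<lfloor>s * of_nat (fact (Suc n))\<rfloor>" for s n
  have step: "val s (Suc n) = val s n" if g: "good s n" for s n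
  proof -
    obtain k where k: "s * of_nat (fact (Suc n)) = of_int k" using g unfolding good_def Ints_def
      by blast
    have h: "s * of_nat (fact (Suc (Suc n))) = of_int (k * int (n+2))"
      by (simp add: k[symmetric] algebra_simps)
    have "val s (Suc n) = x (Suc n) powi (k * int (n+2))"
      by (simp only: val_def h floor_of_int)
    also have "\<dots> = x (Suc n) powi (int (n+2) * k)" by (simp only: mult.commute)
    finally have "val s (Suc n) = x (Suc n) powi (int (n+2) * k)" .
    also have "\<dots> = (x (Suc n) powi int (n+2)) powi k" by (simp only: power_int_mult)
    also have "\<dots> = (x (Suc n) ^ (n+2)) powi k" by (simp only: power_int_of_nat)
    also have "\<dots> = val s n" unfolding val_def xs k by simp
    finally show ?thesis .
  qed
  have vm: "val s m = val s n" if "good s n" "n \<le> m" for s n m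
    using that(2)
  proof (induction m rule: dec_induct)
    case base then show ?case by simp
  next
    case (step m) then show ?case using \<open>\<And>s n. good s n \<Longrightarrow> val s (Suc n) = val s n\<close>[of s m]
      good_mono[OF that(1) step(1)] by simp
  qed
  define f where "f s = val s (den s)" for s
  have fv: "f s = val s n" if "good s n" for s n
  proof -
    have "f s = val s (max n (den s))" unfolding f_def by (rule vm[symmetric]) (auto intro: good_den)
    also have "\<dots> = val s n" by (rule vm[OF that]) simp
    finally show ?thesis .
  qed
  have "f (s + t) = f s * f t" for s t
  proof -
    define n where "n = max (den s) (max (den t) (den (s+t)))"
    have gs: "good s n" and gt: "good t n"
      by (auto intro!: good_mono[OF good_den] simp: n_def)
    obtain k where k: "s * of_nat (fact (Suc n)) = of_int k" using gs unfolding good_def Ints_def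
      by blast
    obtain l where l: "t * of_nat (fact (Suc n)) = of_int l" using gt unfolding good_def Ints_def
      by blast
    have "good (s + t) n" unfolding good_def using k l by (simp add: distrib_right)
    then have "f (s + t) = val (s+t) n" by (rule fv)
    also have "\<dots> = x n powi (k + l)" unfolding val_def using k l by (simp add: distrib_right)
    also have "\<dots> = x n powi k * x n powi l" using xn by (simp add: power_int_add)
    also have "\<dots> = f s * f t" using fv[OF gs] fv[OF gt] unfolding val_def k l by simp
    finally show ?thesis .
  qed
  moreover have "f 1 = c"
  proof -
    have "good 1 0" unfolding good_def by simp
    then have "f 1 = val 1 0" by (rule fv)
    then show ?thesis unfolding val_def using x0 by simp
  qed
  ultimately show ?thesis by blast
qed

lemma qpow_hom: "qpow (x + y) = qpow x * qpow y" "qpow 1 = to_ac fls_X"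
proof -
  have "\<exists>f::rat \<Rightarrow> Cq. (\<forall>x y. f (x + y) = f x * f y) \<and> f 1 = to_ac fls_X"
    by (rule hom_exists) simp
  from someI_ex[OF this] show "qpow (x + y) = qpow x * qpow y" "qpow 1 = to_ac fls_X"
    unfolding qpow_def by auto
qed

lemma qpow_0: "qpow 0 = 1"
proof -
  have "qpow 0 = qpow 0 * qpow 0" using qpow_hom(1)[of 0 0] by simp
  moreover have "qpow 0 \<noteq> 0"
  proof
    assume "qpow 0 = 0"
    then have "qpow 1 = 0" using qpow_hom(1)[of 1 0] by simp
    then show False using qpow_hom(2) by simp
  qed
  ultimately show ?thesis by (metis mult_cancel_left1)
qed

lemma qpow_nz: "qpow x \<noteq> 0"
  using qpow_hom(1)[of x "-x"] qpow_0 by auto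



lemma alg_h:
  fixes b a p r b1 a1 p1 r1 A B D :: rat
  shows "((- D*(a*b) - 2*B*(a*p) - A*(p*r))
    + (- (p*p*A + 2*p*b*B + b*b*D)*(a1*b1) - 2*(p*r*A + (p*a + b*r)*B + a*b*D)*(a1*p1)
       - (r*r*A + 2*r*a*B + a*a*D)*(p1*r1)))
    - (- D*((b*a1 + a*r1)*(b*b1 + a*p1)) - 2*B*((b*a1 + a*r1)*(p*b1 + r*p1))
      - A*((p*b1 + r*p1)*(p*a1 + r*r1))) = (b1*r1 - a1*p1 - 1)*(a*b*D + 2*a*p*B + p*r*A)"
  by (simp add: algebra_simps)

lemma alg_id:
  fixes b a p r b1 a1 p1 r1 A B D :: rat
  assumes "b1*r1 - a1*p1 = 1"
  shows "(- D*(a*b) - 2*B*(a*p) - A*(p*r))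
    + (- (p*p*A + 2*p*b*B + b*b*D)*(a1*b1) - 2*(p*r*A + (p*a + b*r)*B + a*b*D)*(a1*p1)
       - (r*r*A + 2*r*a*B + a*a*D)*(p1*r1))
    = - D*((b*a1 + a*r1)*(b*b1 + a*p1)) - 2*B*((b*a1 + a*r1)*(p*b1 + r*p1))
      - A*((p*b1 + r*p1)*(p*a1 + r*r1))" (is "?L = ?R")
proof -
  have z: "b1*r1 - a1*p1 - 1 = 0" using assms by (simp only: diff_self)
  have "?L - ?R = 0" using alg_h[of D a b B p A r a1 b1 p1 r1] unfolding z mult_zero_left .
  then show ?thesis by (simp only: right_minus_eq)
qed

lemma form_add_l: "form C (x + y) z = form C x z + form C y z"
  unfolding form_def by (simp add: sum.distrib distrib_right)
lemma form_add_r: "form C z (x + y) = form C z x + form C z y"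
  unfolding form_def by (simp add: sum.distrib distrib_left)
lemma form_smult_l: "form C (c *s x) z = c * form C x z"
  unfolding form_def by (simp add: sum_distrib_left mult.assoc)
lemma form_smult_r: "form C z (c *s x) = c * form C z x"
  unfolding form_def by (simp add: sum_distrib_left algebra_simps)
lemma form_sym:
  assumes "simply_laced_cartan C" shows "form C x y = form C y x"
proof -
  have s0: "\<forall>i j. C $ i $ j = C $ j $ i" using assms unfolding simply_laced_cartan_def
    by (rule conjunct1)
  have t: "x$i * of_int (C$i$j) * y$j = y$j * of_int (C$j$i) * x$i" for i j
  proof -
    have "C$i$j = C$j$i" using s0 by blast
    then show ?thesis by (simp add: mult_ac)
  qed
  show ?thesis unfolding form_def
    by (subst sum.swap) (simp only: t)
qed

lemma mult22: "((A::int^2^2) ** B) $ i $ j = A$i$1*B$1$j + A$i$2*B$2$j"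
  by (simp add: matrix_matrix_mult_def sum_2)

lemma idx_comp: "idx_map g1 (idx_map g2 v) = idx_map (g2 ** g1) v"
  unfolding idx_map_def Let_def mult22
  by (simp add: vec_eq_iff algebra_simps)

lemma idx_id: "idx_map (mat 1) v = v"
  unfolding idx_map_def Let_def by (simp add: mat_def vec_eq_iff)

lemma qexp_id: "q_exp C (mat 1) v = 0"
  unfolding q_exp_def Let_def by (simp add: mat_def)


lemma qexp_comp:
  assumes C: "simply_laced_cartan C" and g1: "det g1 = 1"
  shows "q_exp C g2 v + q_exp C g1 (idx_map g2 v) = q_exp C (g2 ** g1) v"
proof -
  obtain l m where v: "v = (l, m)" by (cases v)
  define b where "b = rat_of_int (g2$1$1)"
  define a where "a = rat_of_int (g2$1$2)"
  define p where "p = rat_of_int (g2$2$1)"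
  define r where "r = rat_of_int (g2$2$2)"
  define b1 where "b1 = rat_of_int (g1$1$1)"
  define a1 where "a1 = rat_of_int (g1$1$2)"
  define p1 where "p1 = rat_of_int (g1$2$1)"
  define r1 where "r1 = rat_of_int (g1$2$2)"
  define A where "A = form C l l"
  define B where "B = form C m l"
  define D where "D = form C m m"
  have sym: "form C l m = B" using form_sym[OF C] by (simp add: B_def)
  have "rat_of_int (g1$1$1 * g1$2$2 - g1$1$2 * g1$2$1) = 1" using g1 by (simp add: det_2)
  then have d1: "b1*r1 - a1*p1 = 1" unfolding b1_def a1_def p1_def r1_def by simp
  have iv: "idx_map g2 v = (r *s l + a *s m, p *s l + b *s m)"
    unfolding idx_map_def Let_def v b_def a_def p_def r_def by simp
  have e1: "q_exp C g2 v = - D*(a*b) - 2*B*(a*p) - A*(p*r)"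
    unfolding q_exp_def Let_def v A_def B_def D_def a_def b_def p_def r_def by simp
  have sym': "form C l m = form C m l" using form_sym[OF C] .
  have F: "form C (x1 *s l + y1 *s m) (x2 *s l + y2 *s m) = x1*x2*A + (x1*y2 + y1*x2)*B + y1*y2*D"
    for x1 y1 x2 y2
    unfolding form_add_l form_add_r form_smult_l form_smult_r sym' A_def B_def D_def
    by (simp add: ring_distribs mult_ac)
  have c1: "p*b+b*p = 2*p*b" "b*a = a*b" "r*a+a*r = 2*r*a" by (simp_all add: algebra_simps)
  have e2: "q_exp C g1 (idx_map g2 v) =
     - (p*p*A + 2*p*b*B + b*b*D)*(a1*b1) - 2*(p*r*A + (p*a + b*r)*B + a*b*D)*(a1*p1)
       - (r*r*A + 2*r*a*B + a*a*D)*(p1*r1)"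
    unfolding q_exp_def Let_def iv fst_conv snd_conv F of_int_mult c1
      a1_def[symmetric] b1_def[symmetric] p1_def[symmetric] r1_def[symmetric] ..
  have e3: "q_exp C (g2 ** g1) v = - D*((b*a1 + a*r1)*(b*b1 + a*p1)) - 2*B*((b*a1 + a*r1)*(p*b1 + r*p1))
      - A*((p*b1 + r*p1)*(p*a1 + r*r1))"
    unfolding q_exp_def Let_def v mult22 A_def B_def D_def a_def b_def p_def r_def
      a1_def b1_def p1_def r1_def fst_conv snd_conv of_int_mult of_int_add ..
  show ?thesis unfolding e1 e2 e3 by (rule alg_id[OF d1])
qed



definition hinv :: "int^2^2 \<Rightarrow> int^2^2" where
  "hinv g = (\<chi> i j. if i = 1 \<and> j = 1 then g$2$2 else if i = 1 then - g$1$2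
      else if j = 1 then - g$2$1 else g$1$1)"

lemma hinv_entries: "hinv g $1$1 = g$2$2" "hinv g $1$2 = - g$1$2"
  "hinv g $2$1 = - g$2$1" "hinv g $2$2 = g$1$1"
  by (simp_all add: hinv_def)

lemma hinv_l: assumes "det g = 1" shows "hinv g ** g = mat 1"
  using assms unfolding vec_eq_iff forall_2 mult22 hinv_entries det_2
  by (simp add: mat_def algebra_simps)

lemma hinv_r: assumes "det g = 1" shows "g ** hinv g = mat 1"
  using assms unfolding vec_eq_iff forall_2 mult22 hinv_entries det_2
  by (simp add: mat_def algebra_simps)

lemma idx_inv1: "g \<in> SL2Z \<Longrightarrow> idx_map g (idx_map (hinv g) w) = w"
  unfolding idx_comp SL2Z_def by (simp add: hinv_l idx_id)

lemma idx_inv2: "g \<in> SL2Z \<Longrightarrow> idx_map (hinv g) (idx_map g v) = v"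
  unfolding idx_comp SL2Z_def by (simp add: hinv_r idx_id)

lemma fib: assumes "g \<in> SL2Z" shows "{v. idx_map g v = w} = {idx_map (hinv g) w}"
proof -
  have "idx_map g v = w \<longleftrightarrow> v = idx_map (hinv g) w" for v
    using idx_inv1[OF assms] idx_inv2[OF assms] by metis
  then show ?thesis by blast
qed

lemma rho_SL: assumes "g \<in> SL2Z"
  shows "rho C g f w = qpow (q_exp C g (idx_map (hinv g) w)) * f (idx_map (hinv g) w)"
  unfolding rho_def fib[OF assms] by simp

lemma idx_e1: "fst (idx_map g (\<chi> i. 1, 0)) $ i = of_int (g$2$2)"
  "snd (idx_map g (\<chi> i. 1, 0)) $ i = of_int (g$2$1)"
  "fst (idx_map g (0, \<chi> i. 1)) $ i = of_int (g$1$2)"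
  "snd (idx_map g (0, \<chi> i. 1)) $ i = of_int (g$1$1)"
  by (simp_all add: idx_map_def Let_def)

theorem mainTheorem4:
  fixes C :: "int ^ 'n ^ 'n"
  assumes "simply_laced_cartan C"
  shows "(\<forall>g\<in>SL2Z. \<forall>(c::Cq) f f'. rho C g (\<lambda>v. c * f v + f' v) = (\<lambda>w. c * rho C g f w + rho C g f' w))
       \<and> rho C (mat 1) = id
       \<and> (\<forall>g1\<in>SL2Z. \<forall>g2\<in>SL2Z. rho C g1 \<circ> rho C g2 = rho C (g2 ** g1))
       \<and> (\<forall>g\<in>SL2Z. \<forall>g'\<in>SL2Z. rho C g = rho C g' \<longrightarrow> g = g')"
proof (intro conjI ballI allI impI)
  fix g :: "int^2^2" and c :: Cq and f f' :: "'n formal_sum"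
  show "rho C g (\<lambda>v. c * f v + f' v) = (\<lambda>w. c * rho C g f w + rho C g f' w)"
    unfolding rho_def by (simp add: sum.distrib sum_distrib_left distrib_left mult.left_commute)
next
  show "rho C (mat 1) = id"
  proof (intro ext)
    fix f :: "'n formal_sum" and w :: "(rat^'n) \<times> (rat^'n)"
    have "{v. idx_map (mat 1) v = w} = {w}" by (simp add: idx_id)
    then show "rho C (mat 1) f w = id f w" unfolding rho_def by (simp add: qexp_id qpow_0)
  qed
next
  fix g1 g2 assume g1: "g1 \<in> SL2Z" and g2: "g2 \<in> SL2Z"
  show "rho C g1 \<circ> rho C g2 = rho C (g2 ** g1)"
  proof (intro ext)
    fix f :: "'n formal_sum" and w :: "(rat^'n) \<times> (rat^'n)"
    define u where "u = idx_map (hinv g1) w"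
    define v0 where "v0 = idx_map (hinv g2) u"
    have gu: "idx_map g2 v0 = u" unfolding v0_def by (rule idx_inv1[OF g2])
    have set: "{v. idx_map (g2 ** g1) v = w} = {v0}"
    proof -
      have "idx_map (g2 ** g1) v = w \<longleftrightarrow> v = v0" for v
      proof
        assume "idx_map (g2 ** g1) v = w"
        then have "idx_map g1 (idx_map g2 v) = w" by (simp add: idx_comp)
        then have "idx_map g2 v = u" unfolding u_def using idx_inv2[OF g1] by metis
        then show "v = v0" unfolding v0_def using idx_inv2[OF g2] by metis
      next
        assume "v = v0"
        then show "idx_map (g2 ** g1) v = w"
          using gu idx_inv1[OF g1] by (simp add: idx_comp[symmetric] u_def)
      qed
      then show ?thesis by blast
    qed
    have dg1: "det g1 = 1" using g1 by (simp add: SL2Z_def)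
    have "(rho C g1 \<circ> rho C g2) f w = qpow (q_exp C g1 u) * (qpow (q_exp C g2 v0) * f v0)"
      by (simp add: rho_SL[OF g1] rho_SL[OF g2] u_def v0_def)
    also have "\<dots> = qpow (q_exp C g2 v0 + q_exp C g1 (idx_map g2 v0)) * f v0"
      by (simp add: qpow_hom gu mult_ac)
    also have "\<dots> = qpow (q_exp C (g2 ** g1) v0) * f v0"
      by (simp only: qexp_comp[OF assms dg1])
    also have "\<dots> = rho C (g2 ** g1) f w"
      unfolding rho_def set by simp
    finally show "(rho C g1 \<circ> rho C g2) f w = rho C (g2 ** g1) f w" .
  qed
next
  fix g g' assume g: "g \<in> SL2Z" and g': "g' \<in> SL2Z" and eq: "rho C g = rho C g'"
  have E: "idx_map g v = idx_map g' v" for v :: "(rat^'n) \<times> (rat^'n)"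
  proof -
    define d :: "'n formal_sum" where "d = (\<lambda>x. if x = v then 1 else 0)"
    define w where "w = idx_map g v"
    have "rho C g d w = qpow (q_exp C g v)"
      by (simp add: rho_SL[OF g] w_def idx_inv2[OF g] d_def)
    then have "rho C g' d w \<noteq> 0" using eq qpow_nz by metis
    then have "idx_map (hinv g') w = v" by (simp add: rho_SL[OF g'] d_def split: if_splits)
    then have "idx_map g' (idx_map (hinv g') w) = idx_map g' v" by simp
    then have "w = idx_map g' v" by (simp only: idx_inv1[OF g'])
    then show ?thesis by (simp only: w_def)
  qed
  fix i :: 'n
  have "of_int (g$2$2) = (of_int (g'$2$2) :: rat)" "of_int (g$2$1) = (of_int (g'$2$1) :: rat)"
    "of_int (g$1$2) = (of_int (g'$1$2) :: rat)" "of_int (g$1$1) = (of_int (g'$1$1) :: rat)"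
    using idx_e1[of g i] idx_e1[of g' i] E by metis+
  then have "g$2$2 = g'$2$2" "g$2$1 = g'$2$1" "g$1$2 = g'$1$2" "g$1$1 = g'$1$1" by simp_all
  then show "g = g'" unfolding vec_eq_iff forall_2 by simp
qed


end
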